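(* Let $(\mathrm X,\mathsf d,\mathfrak m)$ be a geodesic metric measure space and let $\{x_i\}_{i\in I}$ be a countable collection of distinct points of $\mathrm X$. For $i,j\in I$ and $\delta\in\mathbb R$ let $U^\delta_{i,j}=\{x\in\mathrm X:\mathsf d(x,x_i)-\mathsf d(x,x_j)<\delta\}$. Then for any $i,j\in I$ and $\delta>-\mathsf d(x_i,x_j)$, the set $U^\delta_{i,j}$ is star-shaped at $x_i$. Moreover, there exists a countable set $S_{i,j}\subset(-\mathsf d(x_i,x_j),\infty)$ such that $$\mathfrak m(\{x\in\mathrm X:\mathsf d(x,x_i)-\mathsf d(x,x_j)=\delta\})=0\qquad\forall\,\delta\in(-\mathsf d(x_i,x_j),\infty)\setminus S_{i,j}.$$
   Context: A metric measure space is a complete separable metric space with a non-negative, non-zero Borel measure finite on bounded sets; geodesic means any two points are joined by a geodesic $\gamma:[0,1]\to\mathrm X$, $\mathsf d(\gamma_s,\gamma_t)=|s-t|\mathsf d(\gamma_0,\gamma_1)$. A Borel set $T$ is star-shaped at $x\in T$ if for every $y\in T$ there is a geodesic from $x$ to $y$ contained in $T$. *)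

theory Defs
  imports "HOL-Analysis.Analysis"
begin

text \<open>A metric measure space: the ambient type is a complete separable metric
  space (class polish_space = complete metric + second countable), and M is a
  non-zero Borel measure, finite on bounded (Borel) sets.\<close>
definition mms :: "'a::polish_space measure \<Rightarrow> bool" where
  "mms M \<longleftrightarrow> sets M = sets borel \<and> emeasure M (space M) \<noteq> 0 \<and>
     (\<forall>B. B \<in> sets borel \<and> bounded B \<longrightarrow> emeasure M B < \<infinity>)"

definition geodesic_between :: "(real \<Rightarrow> 'a::metric_space) \<Rightarrow> 'a \<Rightarrow> 'a \<Rightarrow> bool" where
  "geodesic_between \<gamma> x y \<longleftrightarrow> \<gamma> 0 = x \<and> \<gamma> 1 = y \<and>
     (\<forall>s\<in>{0..1}. \<forall>t\<in>{0..1}. dist (\<gamma> s) (\<gamma> t) = \<bar>s - t\<bar> * dist x y)"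

definition geodesic_space :: "'a::metric_space itself \<Rightarrow> bool" where
  "geodesic_space _ \<longleftrightarrow> (\<forall>x y::'a. \<exists>\<gamma>. geodesic_between \<gamma> x y)"

definition star_shaped_at :: "'a::metric_space set \<Rightarrow> 'a \<Rightarrow> bool" where
  "star_shaped_at T x \<longleftrightarrow> T \<in> sets borel \<and> x \<in> T \<and>
     (\<forall>y\<in>T. \<exists>\<gamma>. geodesic_between \<gamma> x y \<and> \<gamma> ` {0..1} \<subseteq> T)"

end

theory Submission
  imports Defs
begin

lemma star_part:
  fixes a b :: "'a::polish_space"
  assumes geo: "geodesic_space TYPE('a)" and d: "\<delta> > - dist a b"
  shows "star_shaped_at {y. dist y a - dist y b < \<delta>} a"
proof -
  let ?U = "{y. dist y a - dist y b < \<delta>}"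
  have "open ?U"
    by (intro open_Collect_less continuous_intros)
  hence "?U \<in> sets borel" by simp
  moreover have "a \<in> ?U" using d by simp
  moreover have "\<exists>\<gamma>. geodesic_between \<gamma> a y \<and> \<gamma> ` {0..1} \<subseteq> ?U" if y: "y \<in> ?U" for y
  proof -
    obtain \<gamma> where g: "geodesic_between \<gamma> a y" using geo unfolding geodesic_space_def by blast
    have "\<gamma> t \<in> ?U" if t: "t \<in> {0..1}" for t
    proof -
      have g0: "\<gamma> 0 = a" and g1: "\<gamma> 1 = y" using g unfolding geodesic_between_def by auto
      have h: "\<forall>s\<in>{0..1}. \<forall>t\<in>{0..1}. dist (\<gamma> s) (\<gamma> t) = \<bar>s - t\<bar> * dist a y"
        using g unfolding geodesic_between_def by auto
      have e1: "dist (\<gamma> t) a = t * dist a y" using h[rule_format, of t 0] t g0 by auto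
      have e2: "dist (\<gamma> t) y = (1 - t) * dist a y" using h[rule_format, of t 1] t g1 by auto
      have "dist y b \<le> dist (\<gamma> t) y + dist (\<gamma> t) b" by (metis dist_commute dist_triangle)
      moreover have "dist a y = dist y a" by (rule dist_commute)
      ultimately show ?thesis using e1 e2 y by (auto simp: algebra_simps)
    qed
    thus ?thesis using g by blast
  qed
  ultimately show ?thesis unfolding star_shaped_at_def by blast
qed

lemma null_part:
  fixes M :: "'a::polish_space measure" and a b :: 'a
  assumes mms: "mms M"
  shows "\<exists>S. countable S \<and> S \<subseteq> {- dist a b<..} \<and>
        (\<forall>\<delta>\<in>{- dist a b<..} - S. emeasure M {y. dist y a - dist y b = \<delta>} = 0)"
proof -
  define f where "f = (\<lambda>y. dist y a - dist y b)"
  have sM: "sets M = sets borel" using mms unfolding mms_def by auto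
  have spM: "space M = UNIV" using sets_eq_imp_space_eq[OF sM] by simp
  have fin: "emeasure M B < \<infinity>" if "B \<in> sets borel" "bounded B" for B
    using mms that unfolding mms_def by auto
  have fb: "f \<in> borel_measurable borel" unfolding f_def
    by (intro borel_measurable_continuous_onI continuous_intros)
  hence fM: "f \<in> borel_measurable M" using measurable_cong_sets[OF sM refl] by blast
  define N where "N n = distr (density M (indicator (ball a (real n)))) borel f" for n :: nat
  have ballM: "ball a (real n) \<in> sets M" for n using sM by simp
  have levM: "f -` {\<delta>} \<in> sets M" for \<delta>
    using measurable_sets[OF fM, of "{\<delta>}"] spM by simp
  have eN: "emeasure (N n) {\<delta>} = emeasure M (ball a (real n) \<inter> f -` {\<delta>})" for n \<delta>
  proof -
    have fM': "f \<in> borel_measurable (density M (indicator (ball a (real n))))" using fM by simp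
    have "emeasure (N n) {\<delta>} = emeasure (density M (indicator (ball a (real n)))) (f -` {\<delta>} \<inter> space (density M (indicator (ball a (real n)))))"
      unfolding N_def
      by (rule emeasure_distr[OF fM']) simp
    also have "\<dots> = emeasure M (ball a (real n) \<inter> f -` {\<delta>})"
      using spM emeasure_restricted[OF ballM levM] by simp
    finally show ?thesis .
  qed
  have finN: "finite_measure (N n)" for n
  proof
    have "emeasure (N n) (space (N n)) = emeasure M (ball a (real n) \<inter> f -` UNIV)"
      unfolding N_def
      by (subst emeasure_distr) (use fM spM emeasure_restricted[OF ballM sets.top, of n] in auto)
    also have "\<dots> = emeasure M (ball a (real n))" by simp
    also have "\<dots> < \<infinity>" by (rule fin) auto
    finally show "emeasure (N n) (space (N n)) \<noteq> \<infinity>" by simp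
  qed
  define S where "S = (\<Union>n. {\<delta>. measure (N n) {\<delta>} \<noteq> 0}) \<inter> {- dist a b<..}"
  have "countable S" unfolding S_def
    by (intro countable_Int1 countable_UN[OF _ finite_measure.countable_support[OF finN]]) auto
  moreover have "emeasure M {y. f y = \<delta>} = 0" if "\<delta> \<notin> S" "\<delta> > - dist a b" for \<delta>
  proof -
    have "measure (N n) {\<delta>} = 0" for n using that unfolding S_def by auto
    hence z: "emeasure (N n) {\<delta>} = 0" for n
      using finite_measure.emeasure_eq_measure[OF finN] by simp
    have "ball a (real n) \<inter> f -` {\<delta>} \<in> null_sets M" for n
      using z[of n] eN[of n] ballM levM by auto
    hence "(\<Union>n. ball a (real n) \<inter> f -` {\<delta>}) \<in> null_sets M" by blast
    moreover have "(\<Union>n. ball a (real n) \<inter> f -` {\<delta>}) = {y. f y = \<delta>}"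
    proof (intro equalityI subsetI)
      fix y assume "y \<in> {y. f y = \<delta>}"
      moreover obtain n where "dist a y < real n" using reals_Archimedean2 by blast
      ultimately show "y \<in> (\<Union>n. ball a (real n) \<inter> f -` {\<delta>})" by auto
    qed auto
    ultimately show ?thesis by (metis (no_types, lifting) null_setsD1)
  qed
  moreover have "S \<subseteq> {- dist a b<..}" unfolding S_def by blast
  ultimately show ?thesis unfolding f_def by (intro exI[of _ S]) auto
qed

theorem lemma6p2:
  fixes M :: "'a::polish_space measure" and x :: "'i \<Rightarrow> 'a" and I :: "'i set"
  assumes "mms M" and "geodesic_space TYPE('a)"
    and "countable I" and "inj_on x I"
  shows "\<forall>i\<in>I. \<forall>j\<in>I.
     (\<forall>\<delta>::real. \<delta> > - dist (x i) (x j) \<longrightarrow>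
        star_shaped_at {y. dist y (x i) - dist y (x j) < \<delta>} (x i)) \<and>
     (\<exists>S. countable S \<and> S \<subseteq> {- dist (x i) (x j)<..} \<and>
        (\<forall>\<delta>\<in>{- dist (x i) (x j)<..} - S.
           emeasure M {y. dist y (x i) - dist y (x j) = \<delta>} = 0))"
proof (intro ballI conjI allI impI)
  fix i j \<delta> assume "\<delta> > - dist (x i) (x j)"
  then show "star_shaped_at {y. dist y (x i) - dist y (x j) < \<delta>} (x i)"
    by (rule star_part[OF assms(2)])
next
  fix i j
  show "\<exists>S. countable S \<and> S \<subseteq> {- dist (x i) (x j)<..} \<and>
        (\<forall>\<delta>\<in>{- dist (x i) (x j)<..} - S.
           emeasure M {y. dist y (x i) - dist y (x j) = \<delta>} = 0)"
    by (rule null_part[OF assms(1)])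
qed

end
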